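(* Let $K,L,N$ be positive integers and $t$, $n\ge 2$ integers with $K=nt+(n-1)L$ and $L\ge t$, and consider a $(K,L,M,N)$ multi-antenna coded caching system with $\frac{M}{N}=\frac{t}{K}$. Then the delivery time $$T^*=\frac{K-t}{t+L}=n-1$$ is achievable by a scheme with subpacketization number $\frac{K}{\gcd(K,t,L)}$.
   Context: $(K,L,M,N)$ multi-antenna coded caching system: a server holds $N$ files $W_1,\dots,W_N$, each of size one unit, and has $L$ transmit antennas; it serves $K$ single-antenna users over a MISO broadcast channel of capacity one file per unit time. User $k$ has a cache of size $M$ units ($0\le M\le N$). In the placement phase (before demands are known) the server fills caches with uncoded file content. In the delivery phase each user $k$ requests a file $W_{d_k}$; the server sends vectors $\mathbf{x}(\tau)\in\mathbb{C}^L$ and user $k$ receives $y_k(\tau)=\mathbf{h}_k^T\mathbf{x}(\tau)+w_k(\tau)$ with $\mathbf{h}_k\in\mathbb{C}^L$ its channel vector; all nodes have perfect channel knowledge, the channel vectors are generic, and the high-SNR regime is considered (noise neglected). A scheme is correct if every user recovers its requested file from its cache and received signals, for every demand vector. The subpacketization number is the number of equal-size subfiles into which each file is split; if each file is split into $F$ subfiles and the delivery consists of $S'$ transmissions each of size $1/F$ file, the delivery time is $T=S'/F$. "Achievable" means such a correct scheme exists for every demand vector with that delivery time. *)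

theory Defs
  imports "HOL-Analysis.Analysis"
begin

text \<open>Multi-antenna coded caching (high-SNR, noiseless, linear model).
  Files are indexed by j < N, each file is split into F subfiles g < F; the
  content of subfile (j,g) of a library W is the complex symbol W j g.
  Users are the elements of a finite type 'k (K = CARD('k)); antennas are the
  elements of a finite type 'l (L = CARD('l)).\<close>

definition tx :: "nat \<Rightarrow> nat \<Rightarrow> (nat \<Rightarrow> nat \<Rightarrow> complex^'l) \<Rightarrow> (nat \<Rightarrow> nat \<Rightarrow> complex) \<Rightarrow> complex^'l"
  where "tx N F V W = (\<chi> i. \<Sum>j<N. \<Sum>g<F. W j g * (V j g $ i))"

definition rx :: "complex^'l \<Rightarrow> complex^'l \<Rightarrow> complex"
  where "rx h x = (\<Sum>i\<in>UNIV. h $ i * x $ i)"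

text \<open>Uncoded placement: every user caches whole subfiles, at most M units
  (i.e. M*F subfiles of size 1/F).\<close>
definition uncoded_placement :: "nat \<Rightarrow> nat \<Rightarrow> real \<Rightarrow> ('k \<Rightarrow> (nat \<times> nat) set) \<Rightarrow> bool"
  where "uncoded_placement N F M Z \<longleftrightarrow>
    (\<forall>k. Z k \<subseteq> {..<N} \<times> {..<F} \<and> real (card (Z k)) \<le> M * real F)"

text \<open>Correct delivery with S transmissions (precoders V tau j g) for channels h
  and demand vector d: every user k can recover (i.e. is uniquely determined)
  its requested file from its cache content and its received signals.\<close>
definition correct_delivery ::
  "nat \<Rightarrow> nat \<Rightarrow> nat \<Rightarrow> ('k \<Rightarrow> (nat \<times> nat) set) \<Rightarrow> complex^'l^'k \<Rightarrow> ('k \<Rightarrow> nat)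
     \<Rightarrow> (nat \<Rightarrow> nat \<Rightarrow> nat \<Rightarrow> complex^'l) \<Rightarrow> bool"
  where "correct_delivery N F S Z h d V \<longleftrightarrow>
    (\<forall>k. \<forall>W W'. (\<forall>(j,g)\<in>Z k. W j g = W' j g) \<and>
        (\<forall>\<tau><S. rx (h $ k) (tx N F (V \<tau>) W) = rx (h $ k) (tx N F (V \<tau>) W'))
      \<longrightarrow> (\<forall>g<F. W (d k) g = W' (d k) g))"

end

theory Submission
  imports Defs
begin

definition good :: "complex^'l^'k \<Rightarrow> bool" where
"good h \<longleftrightarrow> (\<forall>\<beta>::'l \<Rightarrow> 'k. inj \<beta> \<longrightarrow>
   (\<forall>c. (\<Sum>i\<in>UNIV. c i *s h$(\<beta> i)) = 0 \<longrightarrow> (\<forall>i. c i = 0)))"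

definition Phi :: "('l \<Rightarrow> 'k) \<Rightarrow> 'l \<Rightarrow> complex^'l^'k \<Rightarrow> complex^'l^'k" where
"Phi \<beta> i0 x = (\<chi> k. if k = \<beta> i0 then (\<Sum>i\<in>UNIV-{i0}. x$(\<beta> i0)$i *s x$(\<beta> i)) else x$k)"

lemma poly_Re: "polynomial_function f \<Longrightarrow> polynomial_function (\<lambda>x. Re (f x))"
  using polynomial_function_compose[of f Re] polynomial_function_bounded_linear[OF bounded_linear_Re]
  by (simp add: o_def)

lemma poly_Im: "polynomial_function f \<Longrightarrow> polynomial_function (\<lambda>x. Im (f x))"
  using polynomial_function_compose[of f Im] polynomial_function_bounded_linear[OF bounded_linear_Im]
  by (simp add: o_def)

lemma poly_cmult:
  assumes f: "polynomial_function f" and g: "polynomial_function g"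
  shows "polynomial_function (\<lambda>x. (f x :: complex) * g x)"
proof -
  have e: "(\<lambda>x. f x * g x) = (\<lambda>x. (Re (f x) *\<^sub>R Re (g x) - Im (f x) *\<^sub>R Im (g x)) *\<^sub>R 1
        + (Re (f x) *\<^sub>R Im (g x) + Im (f x) *\<^sub>R Re (g x)) *\<^sub>R \<i>)"
    by (auto simp: complex_eq_iff)
  show ?thesis unfolding e
    by (intro polynomial_function_add polynomial_function_mult polynomial_function_diff
        poly_Re poly_Im f g polynomial_function_const)
qed

lemma bl_axis2: "bounded_linear (\<lambda>z::complex. axis k (axis l z) :: complex^'l^'k)"
  unfolding linear_conv_bounded_linear[symmetric]
  by (rule linearI) (auto simp: vec_eq_iff axis_def)

lemma poly_nth2: "polynomial_function (\<lambda>x::complex^'l^'k. x$k$l)"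
  by (rule polynomial_function_bounded_linear)
     (rule bounded_linear_compose[OF bounded_linear_vec_nth bounded_linear_vec_nth])

lemma sum_if_const: "(\<Sum>x\<in>A. if P then f x else 0) = (if P then sum f A else 0)"
  by auto

lemma sum_axis2: "(\<Sum>k\<in>UNIV. \<Sum>l\<in>UNIV. axis k (axis l (y k l)) :: 'a::comm_monoid_add^'l::finite^'k::finite) $ a $ b = y a b"
proof -
  have "(\<Sum>k\<in>UNIV. \<Sum>l\<in>UNIV. axis k (axis l (y k l)) :: 'a::comm_monoid_add^'l^'k) $ a = (\<Sum>l\<in>UNIV. axis l (y a l))"
    by (simp add: axis_def sum_if_const)
  then show ?thesis by (simp add: axis_def)
qed

lemma poly_Phi: "polynomial_function (Phi \<beta> i0)"
proof -
  define comp where "comp k l x = (Phi \<beta> i0 x)$k$l" for k l x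
  have e: "Phi \<beta> i0 = (\<lambda>x. \<Sum>k\<in>UNIV. \<Sum>l\<in>UNIV. axis k (axis l (comp k l x)))"
    by (rule ext) (simp only: vec_eq_iff sum_axis2 comp_def, simp)
  have c: "polynomial_function (comp k l)" for k l
  proof (cases "k = \<beta> i0")
    case True
    then have "comp k l = (\<lambda>x. \<Sum>i\<in>UNIV-{i0}. x$(\<beta> i0)$i * x$(\<beta> i)$l)"
      by (auto simp: comp_def Phi_def fun_eq_iff)
    then show ?thesis by (auto intro!: poly_cmult poly_nth2)
  next
    case False
    then have "comp k l = (\<lambda>x. x$k$l)"
      by (auto simp: comp_def Phi_def fun_eq_iff)
    then show ?thesis by (simp add: poly_nth2)
  qed
  show ?thesis unfolding e
    by (intro polynomial_function_sum finite_UNIV)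
       (auto intro: polynomial_function_compose[OF c polynomial_function_bounded_linear[OF bl_axis2], unfolded o_def])
qed

lemma negl_Phi:
  fixes \<beta> :: "'l::finite \<Rightarrow> 'k::finite"
  shows "negligible (Phi \<beta> i0 ` {x. x$(\<beta> i0)$i0 = 0})"
proof (rule negligible_differentiable_image_negligible[OF order_refl])
  show "negligible {x::complex^'l^'k. x$(\<beta> i0)$i0 = 0}"
  proof (rule negligible_subset[OF negligible_hyperplane])
    show "axis (\<beta> i0) (axis i0 (1::complex)) \<noteq> 0 \<or> (0::real) \<noteq> 0"
      by (auto simp: vec_eq_iff axis_def)
    show "{x::complex^'l^'k. x$(\<beta> i0)$i0 = 0} \<subseteq> {x. axis (\<beta> i0) (axis i0 (1::complex)) \<bullet> x = 0}"
      by (auto simp: inner_axis')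
  qed
  show "Phi \<beta> i0 differentiable_on {x::complex^'l^'k. x $ \<beta> i0 $ i0 = 0}"
    by (rule differentiable_on_polynomial_function[OF poly_Phi])
qed

lemma bad_subset:
  fixes h :: "complex^'l::finite^'k::finite"
  assumes "\<not> good h"
  shows "h \<in> (\<Union>\<beta>\<in>{\<beta>::'l::finite\<Rightarrow>'k::finite. inj \<beta>}. \<Union>i0. Phi \<beta> i0 ` {x. x$(\<beta> i0)$i0 = 0})"
proof -
  obtain \<beta> :: "'l \<Rightarrow> 'k" and c i0 where inj: "inj \<beta>" and s: "(\<Sum>i\<in>UNIV. c i *s h$(\<beta> i)) = 0"
    and ci0: "c i0 \<noteq> 0"
    using assms unfolding good_def by blast
  define x where "x = (\<chi> k. if k = \<beta> i0 then (\<chi> i. if i = i0 then 0 else - c i / c i0) else h$k)"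
  have x0: "x$(\<beta> i0)$i0 = 0" by (simp add: x_def)
  have "Phi \<beta> i0 x = h"
  proof -
    have r: "h$(\<beta> i0) = (\<Sum>i\<in>UNIV-{i0}. (- c i / c i0) *s h$(\<beta> i))"
    proof -
      have "(\<Sum>i\<in>UNIV. c i *s h$(\<beta> i)) = c i0 *s h$(\<beta> i0) + (\<Sum>i\<in>UNIV-{i0}. c i *s h$(\<beta> i))"
        by (subst sum.remove[of _ i0]) auto
      with s have "c i0 *s h$(\<beta> i0) = - (\<Sum>i\<in>UNIV-{i0}. c i *s h$(\<beta> i))"
        by (simp add: eq_neg_iff_add_eq_0)
      then have "h$(\<beta> i0) = (1 / c i0) *s (- (\<Sum>i\<in>UNIV-{i0}. c i *s h$(\<beta> i)))"
        using ci0 by (auto simp: vec_eq_iff field_simps)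
      also have "\<dots> = (\<Sum>i\<in>UNIV-{i0}. (- c i / c i0) *s h$(\<beta> i))"
        by (auto simp: vec_eq_iff sum_distrib_left field_simps sum_negf)
      finally show ?thesis .
    qed
    have "x $ \<beta> i = h $ \<beta> i" if "i \<noteq> i0" for i
      using that inj by (auto simp: x_def inj_eq)
    then show ?thesis
      using r by (auto simp: Phi_def vec_eq_iff x_def intro!: sum.cong)
  qed
  then show ?thesis using inj x0 by blast
qed

lemma AE_good_leb: "AE h in lebesgue. good h"
proof -
  let ?N = "(\<Union>\<beta>\<in>{\<beta>::'l::finite\<Rightarrow>'k::finite. inj \<beta>}. \<Union>i0. Phi \<beta> i0 ` {x. x$(\<beta> i0)$i0 = 0})"
  have "negligible ?N"
    by (intro negligible_Union finite_imageI finite_UNIV finite_UN_I) (auto intro: negl_Phi)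
  then have N: "?N \<in> null_sets lebesgue" by (simp add: negligible_iff_null_sets)
  have S: "{x \<in> space lebesgue. \<not> good x} \<subseteq> ?N"
    using bad_subset by blast
  show ?thesis
    using AE_I'[OF N S] .
qed

lemma AE_good: "AE h in (lborel :: (complex^'l::finite^'k::finite) measure). good h"
  using AE_good_leb by (simp add: AE_completion_iff)

lemma rx_row: "rx (h $ (\<beta> i)) w = ((\<chi> i. h $ \<beta> i) *v w) $ i"
  by (simp add: rx_def matrix_vector_mult_def)

lemma zf:
  fixes h :: "complex^'l::finite^'k::finite"
  assumes g: "good h" and v: "v \<in> B" and cB: "card B \<le> CARD('l)" and LK: "CARD('l) \<le> CARD('k)"
  shows "\<exists>w. rx (h$v) w = 1 \<and> (\<forall>x\<in>B-{v}. rx (h$x) w = 0)"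
proof -
  have "CARD('l) - card B \<le> card (UNIV - B)"
    using LK by (simp add: card_Diff_subset)
  then obtain T where T: "T \<subseteq> UNIV - B" "card T = CARD('l) - card B"
    by (meson obtain_subset_with_card_n)
  define B' where "B' = B \<union> T"
  have cB': "card B' = CARD('l)"
    unfolding B'_def using T cB by (subst card_Un_disjoint) auto
  obtain \<beta> :: "'l \<Rightarrow> 'k" where bij: "bij_betw \<beta> UNIV B'"
    using finite_same_card_bij[of "UNIV::'l set" B'] cB' by auto
  then have inj: "inj \<beta>" by (simp add: bij_betw_def)
  define A where "A = (\<chi> i. h $ \<beta> i)"
  have "\<forall>c. (\<Sum>i\<in>UNIV. c i *s row i A) = 0 \<longrightarrow> (\<forall>i. c i = 0)"
    using g inj unfolding good_def A_def by (simp add: row_def)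
  then obtain Bm where Bm: "A ** Bm = mat 1"
    using matrix_right_invertible_independent_rows by blast
  have "v \<in> B'" using v by (simp add: B'_def)
  then obtain i1 where i1: "\<beta> i1 = v"
    using bij by (metis bij_betw_def imageE)
  define w where "w = Bm *v axis i1 1"
  have Aw: "A *v w = axis i1 1"
    by (simp add: w_def matrix_vector_mul_assoc Bm)
  have "rx (h$v) w = 1"
    using rx_row[of h \<beta> i1 w] Aw i1 by (simp add: A_def)
  moreover have "rx (h$x) w = 0" if "x \<in> B - {v}" for x
  proof -
    have "x \<in> B'" using that by (simp add: B'_def)
    then obtain i where i: "\<beta> i = x"
      using bij by (metis bij_betw_def imageE)
    with that i1 have "i \<noteq> i1" by auto
    then show ?thesis
      using rx_row[of h \<beta> i w] Aw i by (simp add: A_def axis_def)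
  qed
  ultimately show ?thesis by blast
qed

definition cach :: "nat \<Rightarrow> nat \<Rightarrow> nat \<Rightarrow> nat \<Rightarrow> bool" where
  "cach Kp tp G f \<longleftrightarrow> (int G - int f) mod int Kp < int tp"
definition ss :: "nat \<Rightarrow> nat \<Rightarrow> nat \<Rightarrow> nat \<Rightarrow> nat" where
  "ss Kp tp Lp \<tau> = (\<tau> div Kp + 1) * tp + (\<tau> div Kp) * Lp"
definition inB :: "nat \<Rightarrow> nat \<Rightarrow> nat \<Rightarrow> nat \<Rightarrow> bool" where
  "inB Kp tp \<tau> G \<longleftrightarrow> (int G - int (\<tau> mod Kp)) mod int Kp < int tp"
definition inX :: "nat \<Rightarrow> nat \<Rightarrow> nat \<Rightarrow> nat \<Rightarrow> nat \<Rightarrow> bool" where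
  "inX Kp tp Lp \<tau> G \<longleftrightarrow> (int G - int (\<tau> mod Kp) - int (ss Kp tp Lp \<tau>)) mod int Kp < int Lp"
definition fsub :: "nat \<Rightarrow> nat \<Rightarrow> nat \<Rightarrow> nat \<Rightarrow> nat \<Rightarrow> nat" where
  "fsub Kp tp Lp \<tau> G = (if inB Kp tp \<tau> G
      then nat ((int (\<tau> mod Kp) + int (ss Kp tp Lp \<tau>)) mod int Kp) else \<tau> mod Kp)"

lemma modI:
  fixes X v M :: int
  assumes "0 \<le> v" "v < M" "M dvd X - v"
  shows "X mod M = v"
proof -
  have "X mod M = v mod M" using assms(3) by (simp add: mod_eq_dvd_iff)
  also have "\<dots> = v" using assms(1,2) by simp
  finally show ?thesis .
qed

lemma dvd_mod_diff: "(M::int) dvd X - X mod M"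
  by (simp add: dvd_minus_mod)

lemma dvd3:
  fixes M A B X q :: int
  assumes "M dvd A" "M dvd B" "X = A + B + M * q"
  shows "M dvd X"
  using assms by simp

lemma basics:
  assumes K: "Kp = (n-1)*(tp+Lp) + tp" and n: "n \<ge> 2" and tL: "tp \<le> Lp" and tau: "\<tau> < (n-1)*Kp"
  shows "tp \<le> ss Kp tp Lp \<tau>" "ss Kp tp Lp \<tau> + Lp + tp \<le> Kp" "0 < Kp" "\<tau> div Kp < n - 1"
proof -
  show Kp: "0 < Kp" using tau by (cases "Kp = 0") auto
  show r: "\<tau> div Kp < n - 1" using tau Kp by (simp add: less_mult_imp_div_less)
  show "tp \<le> ss Kp tp Lp \<tau>" by (simp add: ss_def)
  have "ss Kp tp Lp \<tau> + Lp = (\<tau> div Kp + 1) * (tp + Lp)" by (simp add: ss_def algebra_simps)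
  also have "\<dots> \<le> (n-1)*(tp+Lp)" using r by (intro mult_le_mono1) simp
  finally show "ss Kp tp Lp \<tau> + Lp + tp \<le> Kp" using K by simp
qed


lemma P1:
  assumes K: "Kp = (n-1)*(tp+Lp) + tp" and n: "n \<ge> 2" and tL: "tp \<le> Lp" and tau: "\<tau> < (n-1)*Kp"
    and sv: "inB Kp tp \<tau> G \<or> inX Kp tp Lp \<tau> G"
  shows "\<not> cach Kp tp G (fsub Kp tp Lp \<tau> G)"
proof (cases "inB Kp tp \<tau> G")
  case True
  note b = basics[OF K n tL tau]
  define a where "a = int (\<tau> mod Kp)"
  define s where "s = int (ss Kp tp Lp \<tau>)"
  define M where "M = int Kp"
  define y where "y = (int G - a) mod M"
  define c where "c = (a + s) mod M"
  have M0: "0 < M" using b by (simp add: M_def)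
  have y: "0 \<le> y" "y < int tp" using True M0 by (auto simp: y_def inB_def a_def M_def)
  have c0: "0 \<le> c" using M0 by (simp add: c_def)
  have f: "fsub Kp tp Lp \<tau> G = nat c" using True by (simp add: fsub_def c_def a_def s_def M_def)
  have sb: "int tp \<le> s" "s + int Lp + int tp \<le> M" using b by (auto simp: s_def M_def)
  have "(int G - c) mod M = y - s + M"
  proof (rule modI)
    show "0 \<le> y - s + M" "y - s + M < M" using y sb by auto
    have e: "int G - c - (y - s + M) = ((int G - a) - y) + ((a + s) - c) + M * (-1)" by simp
    have "M dvd (int G - a) - y" unfolding y_def by (rule dvd_mod_diff)
    moreover have "M dvd (a + s) - c" unfolding c_def by (rule dvd_mod_diff)
    ultimately show "M dvd int G - c - (y - s + M)" using e by (rule dvd3)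
  qed
  then show ?thesis using f c0 y sb tL by (simp add: cach_def M_def)
next
  case False
  then show ?thesis by (simp add: fsub_def cach_def inB_def)
qed

lemma P3a:
  assumes K: "Kp = (n-1)*(tp+Lp) + tp" and n: "n \<ge> 2" and tL: "tp \<le> Lp" and tau: "\<tau> < (n-1)*Kp"
    and B: "inB Kp tp \<tau> G"
    and sv: "inB Kp tp \<tau> G' \<or> inX Kp tp Lp \<tau> G'" and nc: "\<not> cach Kp tp G' (fsub Kp tp Lp \<tau> G)"
  shows "inB Kp tp \<tau> G' \<or> (int G' - int (\<tau> mod Kp) - int (ss Kp tp Lp \<tau>) - int tp) mod int Kp < int Lp - int tp"
proof (cases "inB Kp tp \<tau> G'")
  case False
  note b = basics[OF K n tL tau]
  define a where "a = int (\<tau> mod Kp)"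
  define s where "s = int (ss Kp tp Lp \<tau>)"
  define M where "M = int Kp"
  define y where "y = (int G' - a - s) mod M"
  define c where "c = (a + s) mod M"
  have M0: "0 < M" using b by (simp add: M_def)
  have y: "0 \<le> y" "y < int Lp" using False sv M0 by (auto simp: y_def inX_def a_def M_def s_def)
  have c0: "0 \<le> c" using M0 by (simp add: c_def)
  have f: "fsub Kp tp Lp \<tau> G = nat c" using B by (simp add: fsub_def c_def a_def s_def M_def)
  have "(int G' - c) mod M = y"
  proof (rule modI)
    show "0 \<le> y" "y < M" using y b by (auto simp: M_def)
    have e: "int G' - c - y = ((int G' - a - s) - y) + ((a + s) - c) + M * 0" by simp
    have "M dvd (int G' - a - s) - y" unfolding y_def by (rule dvd_mod_diff)
    moreover have "M dvd (a + s) - c" unfolding c_def by (rule dvd_mod_diff)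
    ultimately show "M dvd int G' - c - y" using e by (rule dvd3)
  qed
  then have yt: "int tp \<le> y" using nc f c0 by (simp add: cach_def M_def)
  have "(int G' - a - s - int tp) mod M = y - int tp"
  proof (rule modI)
    show "0 \<le> y - int tp" "y - int tp < M" using y yt b by (auto simp: M_def)
    have e: "int G' - a - s - int tp - (y - int tp) = ((int G' - a - s) - y) + 0 + M * 0" by simp
    have "M dvd (int G' - a - s) - y" unfolding y_def by (rule dvd_mod_diff)
    then show "M dvd int G' - a - s - int tp - (y - int tp)" using dvd_0_right e by (rule dvd3)
  qed
  then show ?thesis using y by (simp add: a_def s_def M_def)
qed simp

lemma P3b:
  assumes nB: "\<not> inB Kp tp \<tau> G"
    and sv: "inB Kp tp \<tau> G' \<or> inX Kp tp Lp \<tau> G'" and nc: "\<not> cach Kp tp G' (fsub Kp tp Lp \<tau> G)"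
  shows "inX Kp tp Lp \<tau> G'"
  using assms by (auto simp: fsub_def cach_def inB_def)


lemma P4:
  assumes K: "Kp = (n-1)*(tp+Lp) + tp" and n: "n \<ge> 2" and tL: "tp \<le> Lp" and L0: "0 < Lp"
    and f: "f < Kp" and nc: "\<not> cach Kp tp G f"
  shows "\<exists>\<tau> < (n-1)*Kp. (inB Kp tp \<tau> G \<or> inX Kp tp Lp \<tau> G) \<and> fsub Kp tp Lp \<tau> G = f"
proof -
  define M where "M = int Kp"
  have Kp0: "0 < Kp" using K L0 n by simp
  have M0: "0 < M" using Kp0 by (simp add: M_def)
  have KM: "M = (int n - 1) * (int tp + int Lp) + int tp" using K n by (simp add: M_def of_nat_diff)
  have "1*(tp+Lp) \<le> (n-1)*(tp+Lp)" using n by (intro mult_le_mono1) simp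
  then have "tp + Lp \<le> (n-1)*(tp+Lp)" by (simp only: mult_1)
  then have "Lp \<le> Kp" using K by linarith
  then have LM: "int Lp \<le> M" by (simp add: M_def)
  define y where "y = (int G - int f) mod M"
  have y: "int tp \<le> y" "y < M" using nc M0 by (auto simp: y_def cach_def M_def)
  define P where "P = tp + Lp"
  have P0: "0 < P" using L0 by (simp add: P_def)
  define D where "D = nat (M - y - 1)"
  have D: "int D = M - y - 1" using y by (simp add: D_def)
  have DP: "D < (n-1)*P"
  proof -
    have "int D < (int n - 1) * (int tp + int Lp)" using D y KM by simp
    also have "\<dots> = int ((n-1)*P)" using n by (simp add: P_def of_nat_diff)
    finally show ?thesis by (simp only: of_nat_less_iff)
  qed
  define m where "m = D div P"
  define \<rho> where "\<rho> = D mod P"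
  have Dm: "D = m * P + \<rho>" by (simp add: m_def \<rho>_def)
  have \<rho>P: "\<rho> < P" using P0 by (simp add: \<rho>_def)
  have mn: "m < n - 1" using DP P0 by (simp add: m_def less_mult_imp_div_less)
  have iD: "int D = int m * (int tp + int Lp) + int \<rho>" using Dm by (simp add: P_def)
  show ?thesis
  proof (cases "\<rho> < tp")
    case True
    define s where "s = (m+1)*tp + m*Lp"
    define a where "a = nat ((int f - int s) mod M)"
    have ia: "int a = (int f - int s) mod M" using M0 by (simp add: a_def)
    have "int a < int Kp" using M0 ia by (simp add: M_def)
    then have aK: "a < Kp" by (simp only: of_nat_less_iff)
    define \<tau> where "\<tau> = m * Kp + a"
    have td: "\<tau> div Kp = m" "\<tau> mod Kp = a" using aK by (simp_all add: \<tau>_def)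
    have ss: "ss Kp tp Lp \<tau> = s" by (simp add: ss_def td s_def)
    have "\<tau> < (m+1) * Kp" using aK by (simp add: \<tau>_def)
    also have "\<dots> \<le> (n-1) * Kp" using mn by (intro mult_le_mono1) simp
    finally have tlt: "\<tau> < (n-1)*Kp" .
    have "(int G - int a) mod M = int tp - int \<rho> - 1"
    proof (rule modI)
      show "0 \<le> int tp - int \<rho> - 1" "int tp - int \<rho> - 1 < M" using True y by auto
      have "M dvd (int G - int f) - y" unfolding y_def by (rule dvd_mod_diff)
      moreover have "M dvd (int f - int s) - int a" unfolding ia by (rule dvd_mod_diff)
      moreover have "int G - int a - (int tp - int \<rho> - 1) = ((int G - int f) - y) + ((int f - int s) - int a) + M * 1"
        using iD D by (simp add: s_def algebra_simps)
      ultimately show "M dvd int G - int a - (int tp - int \<rho> - 1)" by (rule dvd3)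
    qed
    then have B: "inB Kp tp \<tau> G" using True by (simp add: inB_def td M_def)
    have "(int a + int s) mod M = int f"
    proof (rule modI)
      show "0 \<le> int f" "int f < M" using f by (auto simp: M_def)
      have "M dvd (int f - int s) - int a" unfolding ia by (rule dvd_mod_diff)
      then have "M dvd - ((int f - int s) - int a)" by (simp only: dvd_minus_iff)
      moreover have "int a + int s - int f = - ((int f - int s) - int a)" by simp
      ultimately show "M dvd int a + int s - int f" by (simp only:)
    qed
    then have "fsub Kp tp Lp \<tau> G = f" using B by (simp add: fsub_def td ss M_def)
    then show ?thesis using B tlt by blast
  next
    case False
    define r0 where "r0 = n - 2 - m"
    have ir0: "int r0 = int n - 2 - int m" using mn by (simp add: r0_def of_nat_diff)
    then have n_eq: "int n = int r0 + int m + 2" by simp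
    define s where "s = (r0+1)*tp + r0*Lp"
    define \<tau> where "\<tau> = r0 * Kp + f"
    have td: "\<tau> div Kp = r0" "\<tau> mod Kp = f" using f by (simp_all add: \<tau>_def)
    have ss: "ss Kp tp Lp \<tau> = s" by (simp add: ss_def td s_def)
    have "\<tau> < (r0+1) * Kp" using f by (simp add: \<tau>_def)
    also have "\<dots> \<le> (n-1) * Kp" using mn by (intro mult_le_mono1) (simp add: r0_def)
    finally have tlt: "\<tau> < (n-1)*Kp" .
    have nB: "\<not> inB Kp tp \<tau> G" using y by (simp add: inB_def td y_def M_def)
    have "(int G - int f - int s) mod M = int Lp - 1 - int \<rho> + int tp"
    proof (rule modI)
      show "0 \<le> int Lp - 1 - int \<rho> + int tp" "int Lp - 1 - int \<rho> + int tp < M"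
        using False \<rho>P y LM by (auto simp: P_def)
      have d1: "M dvd (int G - int f) - y" unfolding y_def by (rule dvd_mod_diff)
      have e: "int G - int f - int s - (int Lp - 1 - int \<rho> + int tp) = ((int G - int f) - y) + 0 + M * 0"
        using iD D KM by (simp add: s_def algebra_simps n_eq)
      show "M dvd int G - int f - int s - (int Lp - 1 - int \<rho> + int tp)"
        using d1 dvd_0_right e by (rule dvd3)
    qed
    then have X: "inX Kp tp Lp \<tau> G" using False \<rho>P by (simp add: inX_def td ss M_def P_def)
    have "fsub Kp tp Lp \<tau> G = f" using nB by (simp add: fsub_def td)
    then show ?thesis using X tlt by blast
  qed
qed

lemma cardA:
  assumes M0: "0 < M" and mM: "m \<le> M"
  shows "card {x::nat. x < M \<and> (int x - p) mod int M < int m} = m"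
proof -
  have inj: "inj_on (\<lambda>i. nat ((p + int i) mod int M)) {..<m}"
  proof (rule inj_onI)
    fix i j assume i: "i \<in> {..<m}" and j: "j \<in> {..<m}"
      and e: "nat ((p + int i) mod int M) = nat ((p + int j) mod int M)"
    then have "(p + int i) mod int M = (p + int j) mod int M" using M0 by (subst (asm) eq_nat_nat_iff) auto
    then have "int M dvd (p + int i) - (p + int j)" by (simp add: mod_eq_dvd_iff)
    then have "int M dvd int i - int j" by simp
    moreover have "\<bar>int i - int j\<bar> < int M" using i j mM by auto
    ultimately show "i = j" using dvd_imp_le_int[of "int i - int j" "int M"] by (cases "i = j") auto
  qed
  have eq: "{x::nat. x < M \<and> (int x - p) mod int M < int m} = (\<lambda>i. nat ((p + int i) mod int M)) ` {..<m}"
  proof (intro set_eqI iffI)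
    fix x assume x: "x \<in> {x::nat. x < M \<and> (int x - p) mod int M < int m}"
    define i where "i = nat ((int x - p) mod int M)"
    have ii: "int i = (int x - p) mod int M" using M0 by (simp add: i_def)
    have "(p + int i) mod int M = int x"
    proof (rule modI)
      show "0 \<le> int x" "int x < int M" using x by auto
      have "int M dvd (int x - p) - int i" unfolding ii by (rule dvd_mod_diff)
      then have "int M dvd - ((int x - p) - int i)" by (simp only: dvd_minus_iff)
      moreover have "p + int i - int x = - ((int x - p) - int i)" by simp
      ultimately show "int M dvd p + int i - int x" by (simp only:)
    qed
    moreover have "i < m" using x ii by simp
    ultimately show "x \<in> (\<lambda>i. nat ((p + int i) mod int M)) ` {..<m}"
      by (intro image_eqI[of _ _ i]) auto
  next
    fix x assume "x \<in> (\<lambda>i. nat ((p + int i) mod int M)) ` {..<m}"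
    then obtain i where i: "i < m" and x: "x = nat ((p + int i) mod int M)" by auto
    have ix: "int x = (p + int i) mod int M" using M0 x by simp
    have "int x < int M" using ix M0 by simp
    moreover have "(int x - p) mod int M = int i"
    proof (rule modI)
      show "0 \<le> int i" "int i < int M" using i mM by auto
      have "int M dvd (p + int i) - int x" unfolding ix by (rule dvd_mod_diff)
      then have "int M dvd - ((p + int i) - int x)" by (simp only: dvd_minus_iff)
      moreover have "int x - p - int i = - ((p + int i) - int x)" by simp
      ultimately show "int M dvd int x - p - int i" by (simp only:)
    qed
    ultimately show "x \<in> {x::nat. x < M \<and> (int x - p) mod int M < int m}" using i by simp
  qed
  show ?thesis unfolding eq using inj by (simp add: card_image)
qed

lemma cardB:
  assumes M0: "0 < M" and mM: "m \<le> M"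
  shows "card {x::nat. x < M \<and> (p - int x) mod int M < int m} = m"
proof -
  have inj: "inj_on (\<lambda>i. nat ((p - int i) mod int M)) {..<m}"
  proof (rule inj_onI)
    fix i j assume i: "i \<in> {..<m}" and j: "j \<in> {..<m}"
      and e: "nat ((p - int i) mod int M) = nat ((p - int j) mod int M)"
    then have "(p - int i) mod int M = (p - int j) mod int M" using M0 by (subst (asm) eq_nat_nat_iff) auto
    then have "int M dvd (p - int i) - (p - int j)" by (simp add: mod_eq_dvd_iff)
    then have "int M dvd int j - int i" by simp
    moreover have "\<bar>int j - int i\<bar> < int M" using i j mM by auto
    ultimately show "i = j" using dvd_imp_le_int[of "int j - int i" "int M"] by (cases "i = j") auto
  qed
  have eq: "{x::nat. x < M \<and> (p - int x) mod int M < int m} = (\<lambda>i. nat ((p - int i) mod int M)) ` {..<m}"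
  proof (intro set_eqI iffI)
    fix x assume x: "x \<in> {x::nat. x < M \<and> (p - int x) mod int M < int m}"
    define i where "i = nat ((p - int x) mod int M)"
    have ii: "int i = (p - int x) mod int M" using M0 by (simp add: i_def)
    have "(p - int i) mod int M = int x"
    proof (rule modI)
      show "0 \<le> int x" "int x < int M" using x by auto
      have "int M dvd (p - int x) - int i" unfolding ii by (rule dvd_mod_diff)
      moreover have "p - int i - int x = (p - int x) - int i" by simp
      ultimately show "int M dvd p - int i - int x" by (simp only:)
    qed
    moreover have "i < m" using x ii by simp
    ultimately show "x \<in> (\<lambda>i. nat ((p - int i) mod int M)) ` {..<m}"
      by (intro image_eqI[of _ _ i]) auto
  next
    fix x assume "x \<in> (\<lambda>i. nat ((p - int i) mod int M)) ` {..<m}"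
    then obtain i where i: "i < m" and x: "x = nat ((p - int i) mod int M)" by auto
    have ix: "int x = (p - int i) mod int M" using M0 x by simp
    have "int x < int M" using ix M0 by simp
    moreover have "(p - int x) mod int M = int i"
    proof (rule modI)
      show "0 \<le> int i" "int i < int M" using i mM by auto
      have "int M dvd (p - int i) - int x" unfolding ix by (rule dvd_mod_diff)
      moreover have "p - int x - int i = (p - int i) - int x" by simp
      ultimately show "int M dvd p - int x - int i" by (simp only:)
    qed
    ultimately show "x \<in> {x::nat. x < M \<and> (p - int x) mod int M < int m}" using i by simp
  qed
  show ?thesis unfolding eq using inj by (simp add: card_image)
qed

lemma card_grp:
  fixes e :: "'k::finite \<Rightarrow> nat \<times> nat"
  assumes e: "bij_betw e UNIV ({..<Kp} \<times> {..<gg})" and K0: "0 < Kp" and mK: "m \<le> Kp"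
  shows "card {u. (int (fst (e u)) - p) mod int Kp < int m} = m * gg"
proof -
  have r: "range e = {..<Kp} \<times> {..<gg}" using e by (simp add: bij_betw_def)
  have "e ` {u. (int (fst (e u)) - p) mod int Kp < int m} = {x \<in> range e. (int (fst x) - p) mod int Kp < int m}"
    by blast
  also have "\<dots> = {x::nat. x < Kp \<and> (int x - p) mod int Kp < int m} \<times> {..<gg}"
    unfolding r by auto
  finally have im: "e ` {u. (int (fst (e u)) - p) mod int Kp < int m}
      = {x::nat. x < Kp \<and> (int x - p) mod int Kp < int m} \<times> {..<gg}" .
  have inj: "inj_on e {u. (int (fst (e u)) - p) mod int Kp < int m}"
    using bij_betw_imp_inj_on[OF e] by (rule inj_on_subset) simp
  have "card {u. (int (fst (e u)) - p) mod int Kp < int m}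
      = card (e ` {u. (int (fst (e u)) - p) mod int Kp < int m})"
    by (rule card_image[OF inj, symmetric])
  also have "\<dots> = card ({x::nat. x < Kp \<and> (int x - p) mod int Kp < int m} \<times> {..<gg})"
    by (simp only: im)
  also have "\<dots> = m * gg" using cardA[OF K0 mK] by (simp add: card_cartesian_product)
  finally show ?thesis .
qed

lemma rx_tx: "rx hk (tx N F V W) = (\<Sum>j<N. \<Sum>g<F. W j g * rx hk (V j g))"
  unfolding rx_def tx_def
  by (simp add: sum_distrib_left sum_distrib_right mult_ac sum.swap[of _ UNIV])

lemma rx_sum: "rx hk (\<Sum>u\<in>A. w u) = (\<Sum>u\<in>A. rx hk (w u))"
  unfolding rx_def
  by (simp add: sum_distrib_left sum.swap[of _ UNIV])

lemma sum2_delta: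
  fixes X :: "nat \<Rightarrow> nat \<Rightarrow> 'a::comm_monoid_add"
  assumes "a < N" "b < F"
  shows "(\<Sum>j<N. \<Sum>g<F. if j = a \<and> g = b then X j g else 0) = X a b"
proof -
  have "(\<Sum>g<F. if j = a \<and> g = b then X j g else 0) = (if j = a then X j b else 0)" for j
    using assms(2) by (cases "j = a") auto
  then show ?thesis using assms(1) by simp
qed

theorem theorem3:
  fixes N n t :: nat and M :: real
    and users :: "'k::finite itself" and antennas :: "'l::finite itself"
  assumes "N > 0" and "n \<ge> 2"
    and "CARD('k) = n * t + (n - 1) * CARD('l)"
    and "CARD('l) \<ge> t"
    and "M / real N = real t / real CARD('k)"
  shows "real (CARD('k) - t) / real (t + CARD('l)) = real n - 1 \<and>
    (\<exists>F S (Z :: 'k \<Rightarrow> (nat \<times> nat) set).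
       F = CARD('k) div gcd CARD('k) (gcd t CARD('l)) \<and>
       real S / real F = real (CARD('k) - t) / real (t + CARD('l)) \<and>
       uncoded_placement N F M Z \<and>
       (AE h in (lborel :: (complex^'l^'k) measure).
          \<forall>d :: 'k \<Rightarrow> nat. (\<forall>k. d k < N) \<longrightarrow>
            (\<exists>V :: nat \<Rightarrow> nat \<Rightarrow> nat \<Rightarrow> complex^'l. correct_delivery N F S Z h d V)))"
proof -
  note N0 = assms(1) and n2 = assms(2) and hKK = assms(3) and tL0 = assms(4) and hM = assms(5)
  have L0: "0 < CARD('l)" by simp
  have K0: "0 < CARD('k)" by simp
  define gg where "gg = gcd CARD('k) (gcd t CARD('l))"
  have gg0: "0 < gg" using K0 by (simp add: gg_def)
  have dK: "gg dvd CARD('k)" and dt: "gg dvd t" and dL: "gg dvd CARD('l)"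
    unfolding gg_def by (meson dvd_trans gcd_dvd1 gcd_dvd2)+
  define Kp where "Kp = CARD('k) div gg"
  define tp where "tp = t div gg"
  define Lp where "Lp = CARD('l) div gg"
  have eK: "CARD('k) = Kp * gg" using dK by (simp add: Kp_def)
  have et: "t = tp * gg" using dt by (simp add: tp_def)
  have eL: "CARD('l) = Lp * gg" using dL by (simp add: Lp_def)
  have hK: "Kp = (n-1)*(tp+Lp) + tp"
  proof -
    obtain n1 where n1: "n = Suc n1" using n2 by (cases n) auto
    have "Kp * gg = ((n-1)*(tp+Lp) + tp) * gg"
      using hKK eK et eL by (simp add: n1 algebra_simps)
    then show ?thesis using gg0 by simp
  qed
  have tL: "tp \<le> Lp" using tL0 et eL gg0 by simp
  have Lp0: "0 < Lp" using L0 eL by simp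
  have Kp0: "0 < Kp" using K0 eK by simp
  have LK: "CARD('l) \<le> CARD('k)" using hKK n2
  proof -
    have "1 * CARD('l) \<le> (n-1) * CARD('l)" using n2 by (intro mult_le_mono1) simp
    then have "CARD('l) \<le> (n-1) * CARD('l)" by (simp only: mult_1)
    then show ?thesis using hKK by linarith
  qed
  have "1*(tp+Lp) \<le> (n-1)*(tp+Lp)" using n2 by (intro mult_le_mono1) simp
  then have "tp + Lp \<le> (n-1)*(tp+Lp)" by (simp only: mult_1)
  then have LpK: "Lp \<le> Kp" using hK by linarith
  have "card ({..<Kp} \<times> {..<gg}) = CARD('k)" using eK by (simp add: card_cartesian_product)
  then obtain e :: "'k \<Rightarrow> nat \<times> nat" where e: "bij_betw e UNIV ({..<Kp} \<times> {..<gg})"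
    using finite_same_card_bij[of "UNIV::'k set" "{..<Kp} \<times> {..<gg}"] by auto
  define grp where "grp u = fst (e u)" for u
  define Z :: "'k \<Rightarrow> (nat \<times> nat) set" where
    "Z u = {..<N} \<times> {f. f < Kp \<and> cach Kp tp (grp u) f}" for u
  obtain n1 where n1: "n = Suc n1" using n2 by (cases n) auto
  have "CARD('k) = t + n1 * (t + CARD('l))" using hKK by (simp add: n1 algebra_simps)
  then have Kt: "CARD('k) - t = n1 * (t + CARD('l))" by simp
  have rn1: "real n - 1 = real n1" by (simp add: n1)
  have part1: "real (CARD('k) - t) / real (t + CARD('l)) = real n - 1"
  proof -
    have "real (t + CARD('l)) \<noteq> 0" using L0 by linarith
    then show ?thesis unfolding Kt rn1 of_nat_mult by simp
  qed
  have part2: "real ((n-1)*Kp) / real Kp = real (CARD('k) - t) / real (t + CARD('l))"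
    unfolding part1 rn1 using Kp0 by (simp add: n1)
  have part3: "uncoded_placement N Kp M Z"
    unfolding uncoded_placement_def
  proof (intro allI conjI)
    fix u
    show "Z u \<subseteq> {..<N} \<times> {..<Kp}" by (auto simp: Z_def)
    have "{f. f < Kp \<and> cach Kp tp (grp u) f} = {x. x < Kp \<and> (int (grp u) - int x) mod int Kp < int tp}"
      by (simp add: cach_def)
    then have cz: "card (Z u) = N * tp"
      using cardB[OF Kp0, of tp "int (grp u)"] tL LpK by (simp add: Z_def card_cartesian_product)
    have MM: "M = real N * real t / real CARD('k)" using hM N0 by (simp add: field_simps)
    have "M * real Kp = real N * real tp"
      unfolding MM using gg0 Kp0 by (simp add: eK et)
    then show "real (card (Z u)) \<le> M * real Kp" using cz by simp
  qed
  have deliver: "\<exists>V. correct_delivery N Kp ((n-1)*Kp) Z h d V"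
    if g: "good h" and dN: "\<forall>k. d k < N" for h :: "complex^'l^'k" and d :: "'k \<Rightarrow> nat"
  proof -
    define sv where "sv \<tau> u \<longleftrightarrow> inB Kp tp \<tau> (grp u) \<or> inX Kp tp Lp \<tau> (grp u)" for \<tau> u
    define fs where "fs \<tau> u = fsub Kp tp Lp \<tau> (grp u)" for \<tau> u
    define Cs where "Cs \<tau> u = {x. sv \<tau> x \<and> \<not> cach Kp tp (grp x) (fs \<tau> u)}" for \<tau> u
    define w where "w \<tau> u = (SOME w. rx (h$u) w = 1 \<and> (\<forall>x\<in>Cs \<tau> u - {u}. rx (h$x) w = 0))" for \<tau> u
    define V where "V \<tau> j g = (\<Sum>u\<in>{u. sv \<tau> u \<and> d u = j \<and> fs \<tau> u = g}. w \<tau> u)" for \<tau> j g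
    have cardCs: "card (Cs \<tau> u) \<le> CARD('l)" if tau: "\<tau> < (n-1)*Kp" for \<tau> u
    proof (cases "inB Kp tp \<tau> (grp u)")
      case True
      define a where "a = int (\<tau> mod Kp)"
      define s where "s = int (ss Kp tp Lp \<tau>)"
      define A1 where "A1 = {x. (int (fst (e x)) - a) mod int Kp < int tp}"
      define A2 where "A2 = {x. (int (fst (e x)) - (a + s + int tp)) mod int Kp < int (Lp - tp)}"
      have "Cs \<tau> u \<subseteq> A1 \<union> A2"
      proof
        fix x assume "x \<in> Cs \<tau> u"
        then have "sv \<tau> x" "\<not> cach Kp tp (grp x) (fs \<tau> u)" by (auto simp: Cs_def)
        from P3a[OF hK n2 tL tau True] this
        have "inB Kp tp \<tau> (grp x) \<or> (int (grp x) - a - s - int tp) mod int Kp < int Lp - int tp"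
          by (simp add: sv_def fs_def a_def s_def)
        moreover have eq: "int (grp x) - a - s - int tp = int (fst (e x)) - (a + s + int tp)"
          by (simp add: grp_def)
        ultimately have "inB Kp tp \<tau> (grp x) \<or> (int (fst (e x)) - (a + s + int tp)) mod int Kp < int Lp - int tp"
          by (simp only: eq)
        then show "x \<in> A1 \<union> A2" using tL
          by (auto simp: A1_def A2_def inB_def grp_def a_def of_nat_diff)
      qed
      then have "card (Cs \<tau> u) \<le> card (A1 \<union> A2)" by (simp add: card_mono)
      also have "\<dots> \<le> card A1 + card A2" by (rule card_Un_le)
      also have "\<dots> = tp * gg + (Lp - tp) * gg"
        unfolding A1_def A2_def
        using card_grp[OF e Kp0, of tp a] card_grp[OF e Kp0, of "Lp - tp" "a + s + int tp"] tL LpK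
        by simp
      also have "\<dots> = CARD('l)" using tL eL by (simp add: add_mult_distrib[symmetric])
      finally show ?thesis .
    next
      case False
      define p where "p = int (\<tau> mod Kp) + int (ss Kp tp Lp \<tau>)"
      have "Cs \<tau> u \<subseteq> {x. (int (fst (e x)) - p) mod int Kp < int Lp}"
      proof
        fix x assume "x \<in> Cs \<tau> u"
        then have "sv \<tau> x" "\<not> cach Kp tp (grp x) (fs \<tau> u)" by (auto simp: Cs_def)
        from P3b[OF False] this have "inX Kp tp Lp \<tau> (grp x)" by (simp add: sv_def fs_def)
        then show "x \<in> {x. (int (fst (e x)) - p) mod int Kp < int Lp}"
          by (simp add: inX_def grp_def p_def diff_diff_eq)
      qed
      then have "card (Cs \<tau> u) \<le> card {x. (int (fst (e x)) - p) mod int Kp < int Lp}"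
        by (simp add: card_mono)
      also have "\<dots> = Lp * gg" using card_grp[OF e Kp0 LpK] by simp
      finally show ?thesis using eL by simp
    qed
    have wprop: "rx (h$u) (w \<tau> u) = 1 \<and> (\<forall>x\<in>Cs \<tau> u - {u}. rx (h$x) (w \<tau> u) = 0)"
      if tau: "\<tau> < (n-1)*Kp" and su: "sv \<tau> u" for \<tau> u
    proof -
      have "u \<in> Cs \<tau> u"
        using P1[OF hK n2 tL tau] su by (simp add: Cs_def sv_def fs_def)
      then have "\<exists>w. rx (h$u) w = 1 \<and> (\<forall>x\<in>Cs \<tau> u - {u}. rx (h$x) w = 0)"
        using zf[OF g _ cardCs[OF tau] LK] by blast
      then show ?thesis unfolding w_def by (rule someI_ex)
    qed
    have "correct_delivery N Kp ((n-1)*Kp) Z h d V"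
      unfolding correct_delivery_def
    proof (intro allI impI)
      fix k W W' f
      assume hyp: "(\<forall>(j, g)\<in>Z k. W j g = W' j g) \<and>
          (\<forall>\<tau><(n-1)*Kp. rx (h $ k) (tx N Kp (V \<tau>) W) = rx (h $ k) (tx N Kp (V \<tau>) W'))"
        and f: "f < Kp"
      show "W (d k) f = W' (d k) f"
      proof (cases "cach Kp tp (grp k) f")
        case True
        then have "(d k, f) \<in> Z k" using dN f by (simp add: Z_def)
        then show ?thesis using hyp by auto
      next
        case False
        obtain \<tau> where tau: "\<tau> < (n-1)*Kp" and svk: "sv \<tau> k" and fk: "fs \<tau> k = f"
          using P4[OF hK n2 tL Lp0 f False] by (auto simp: sv_def fs_def)
        have coef: "rx (h$k) (V \<tau> j g) = (if j = d k \<and> g = f then 1 else 0)"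
          if "j < N" "g < Kp" "(j, g) \<notin> Z k" for j g
        proof -
          have ncg: "\<not> cach Kp tp (grp k) g" using that by (simp add: Z_def)
          have "rx (h$k) (V \<tau> j g) = (\<Sum>u\<in>{u. sv \<tau> u \<and> d u = j \<and> fs \<tau> u = g}. rx (h$k) (w \<tau> u))"
            by (simp add: V_def rx_sum)
          also have "\<dots> = (\<Sum>u\<in>{u. sv \<tau> u \<and> d u = j \<and> fs \<tau> u = g}. if u = k then 1 else 0)"
          proof (rule sum.cong[OF refl])
            fix u assume u: "u \<in> {u. sv \<tau> u \<and> d u = j \<and> fs \<tau> u = g}"
            show "rx (h$k) (w \<tau> u) = (if u = k then 1 else 0)"
            proof (cases "u = k")
              case True then show ?thesis using wprop[OF tau] u by auto
            next
              case False
              then have "k \<in> Cs \<tau> u - {u}" using u svk ncg by (auto simp: Cs_def)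
              then show ?thesis using wprop[OF tau] u False by auto
            qed
          qed
          also have "\<dots> = (if j = d k \<and> g = f then 1 else 0)"
            using svk fk by (auto simp: sum.delta')
          finally show ?thesis .
        qed
        have trm: "W j g * rx (h$k) (V \<tau> j g) - W' j g * rx (h$k) (V \<tau> j g)
            = (if j = d k \<and> g = f then W j g - W' j g else 0)"
          if "j < N" "g < Kp" for j g
        proof (cases "(j, g) \<in> Z k")
          case True
          then have "W j g = W' j g" using hyp by auto
          then show ?thesis by (cases "j = d k \<and> g = f") auto
        next
          case False
          then show ?thesis using coef[OF that False] by simp
        qed
        have "0 = rx (h $ k) (tx N Kp (V \<tau>) W) - rx (h $ k) (tx N Kp (V \<tau>) W')"
          using hyp tau by simp
        also have "\<dots> = (\<Sum>j<N. \<Sum>g<Kp. W j g * rx (h$k) (V \<tau> j g) - W' j g * rx (h$k) (V \<tau> j g))"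
          by (simp add: rx_tx sum_subtractf)
        also have "\<dots> = (\<Sum>j<N. \<Sum>g<Kp. if j = d k \<and> g = f then W j g - W' j g else 0)"
          using trm by (intro sum.cong refl) auto
        also have "\<dots> = W (d k) f - W' (d k) f"
          using dN f by (intro sum2_delta) auto
        finally show ?thesis by simp
      qed
    qed
    then show ?thesis by blast
  qed
  have part4: "AE h in (lborel :: (complex^'l^'k) measure).
          \<forall>d :: 'k \<Rightarrow> nat. (\<forall>k. d k < N) \<longrightarrow>
            (\<exists>V :: nat \<Rightarrow> nat \<Rightarrow> nat \<Rightarrow> complex^'l. correct_delivery N Kp ((n-1)*Kp) Z h d V)"
    by (rule eventually_mono[OF AE_good]) (use deliver in blast)
  have FK: "Kp = CARD('k) div gcd CARD('k) (gcd t CARD('l))" by (simp add: Kp_def gg_def)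
  show ?thesis
    apply (rule conjI[OF part1])
    apply (rule exI[of _ Kp], rule exI[of _ "(n-1)*Kp"], rule exI[of _ Z])
    apply (intro conjI FK part2 part3 part4)
    done
qed

end
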